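(* Let $n\ge3$, let $G_2=\overline{L(K_{2,n})}$, and let $G_1$ be a finite bipartite graph with bipartition $(X,Y)$ ($X,Y$ nonempty) such that some vertex is adjacent to all of $X$ and some vertex is adjacent to all of $Y$, and with $\Delta(G_1)\ge n$. Then $G_1$ and $G_2$ are $\mathcal{C}$-$\mathrm{HH}$-symmetric if and only if $G_1$ is $\mathrm{PCM}(n)$-free.
   Context: $\Delta$ denotes maximum degree. $\overline{L(K_{2,n})}$ is the bipartite graph with parts $\{x_1,\dots,x_n\}$, $\{y_1,\dots,y_n\}$ and $x_i\sim y_j$ iff $i\ne j$. A bipartite graph with parts $Z,W$, $|Z|\le|W|$, has a perfect complement matching if there is an injective map $z\mapsto w_z$ from $Z$ to $W$ with $z\nsim w_z$ for all $z$. A $\mathrm{PCM}(n)$ graph is a finite connected bipartite graph with parts $Z,W$, $2\le|Z|\le|W|=n$, having a perfect complement matching. A graph is $\mathrm{PCM}(n)$-free if no $\mathrm{PCM}(n)$ graph is isomorphic to an induced subgraph of it. Subgraphs are induced; a homomorphism maps edges to edges. $G_1$ is $\mathcal{C}$-$\mathrm{HH}$-morphic to $G_2$ if every homomorphism from a finite connected induced subgraph $A$ of $G_1$ onto an induced subgraph $B$ of $G_2$ extends to a homomorphism $G_1\to G_2$; $G_1,G_2$ are $\mathcal{C}$-$\mathrm{HH}$-symmetric if each is $\mathcal{C}$-$\mathrm{HH}$-morphic to the other. *)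

theory Defs
  imports Main
begin

definition graph :: "'a set \<Rightarrow> ('a \<Rightarrow> 'a \<Rightarrow> bool) \<Rightarrow> bool" where
  "graph V E \<longleftrightarrow> (\<forall>u v. E u v \<longrightarrow> u \<in> V \<and> v \<in> V) \<and> (\<forall>u v. E u v \<longrightarrow> E v u) \<and> (\<forall>v. \<not> E v v)"

definition induced :: "('a \<Rightarrow> 'a \<Rightarrow> bool) \<Rightarrow> 'a set \<Rightarrow> 'a \<Rightarrow> 'a \<Rightarrow> bool" where
  "induced E S = (\<lambda>u v. E u v \<and> u \<in> S \<and> v \<in> S)"

definition connected_on :: "('a \<Rightarrow> 'a \<Rightarrow> bool) \<Rightarrow> 'a set \<Rightarrow> bool" where
  "connected_on E S \<longleftrightarrow> S \<noteq> {} \<and> (\<forall>u\<in>S. \<forall>v\<in>S. (induced E S)\<^sup>*\<^sup>* u v)"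

definition max_degree :: "'a set \<Rightarrow> ('a \<Rightarrow> 'a \<Rightarrow> bool) \<Rightarrow> nat" where
  "max_degree V E = Max ((\<lambda>v. card {u \<in> V. E v u}) ` V)"

definition bipartition :: "'a set \<Rightarrow> ('a \<Rightarrow> 'a \<Rightarrow> bool) \<Rightarrow> 'a set \<Rightarrow> 'a set \<Rightarrow> bool" where
  "bipartition V E X Y \<longleftrightarrow> X \<inter> Y = {} \<and> X \<union> Y = V \<and>
     (\<forall>u v. E u v \<longrightarrow> (u \<in> X \<and> v \<in> Y) \<or> (u \<in> Y \<and> v \<in> X))"

definition hom :: "'a set \<Rightarrow> ('a \<Rightarrow> 'a \<Rightarrow> bool) \<Rightarrow> 'b set \<Rightarrow> ('b \<Rightarrow> 'b \<Rightarrow> bool) \<Rightarrow> ('a \<Rightarrow> 'b) \<Rightarrow> bool" where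
  "hom V1 E1 V2 E2 f \<longleftrightarrow> (\<forall>v\<in>V1. f v \<in> V2) \<and>
     (\<forall>u v. u \<in> V1 \<and> v \<in> V1 \<and> E1 u v \<longrightarrow> E2 (f u) (f v))"

definition HH_morphic :: "'a set \<Rightarrow> ('a \<Rightarrow> 'a \<Rightarrow> bool) \<Rightarrow> 'b set \<Rightarrow> ('b \<Rightarrow> 'b \<Rightarrow> bool) \<Rightarrow> bool" where
  "HH_morphic V1 E1 V2 E2 \<longleftrightarrow>
     (\<forall>S T f. S \<subseteq> V1 \<and> finite S \<and> connected_on E1 S \<and> T \<subseteq> V2 \<and>
        hom S (induced E1 S) T (induced E2 T) f \<and> f ` S = T \<longrightarrow>
        (\<exists>g. hom V1 E1 V2 E2 g \<and> (\<forall>x\<in>S. g x = f x)))"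

definition HH_symmetric :: "'a set \<Rightarrow> ('a \<Rightarrow> 'a \<Rightarrow> bool) \<Rightarrow> 'b set \<Rightarrow> ('b \<Rightarrow> 'b \<Rightarrow> bool) \<Rightarrow> bool" where
  "HH_symmetric V1 E1 V2 E2 \<longleftrightarrow> HH_morphic V1 E1 V2 E2 \<and> HH_morphic V2 E2 V1 E1"

definition is_PCM :: "'a set \<Rightarrow> ('a \<Rightarrow> 'a \<Rightarrow> bool) \<Rightarrow> nat \<Rightarrow> bool" where
  "is_PCM S E n \<longleftrightarrow> finite S \<and> connected_on E S \<and>
     (\<exists>Z W. bipartition S E Z W \<and> 2 \<le> card Z \<and> card Z \<le> card W \<and> card W = n \<and>
        (\<exists>m. inj_on m Z \<and> (\<forall>z\<in>Z. m z \<in> W \<and> \<not> E z (m z))))"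

text \<open>PCM(n)-free: no induced subgraph is a PCM(n) graph (equivalently, none is isomorphic
  to a PCM(n) graph, since being PCM(n) is isomorphism invariant).\<close>
definition PCM_free :: "'a set \<Rightarrow> ('a \<Rightarrow> 'a \<Rightarrow> bool) \<Rightarrow> nat \<Rightarrow> bool" where
  "PCM_free V E n \<longleftrightarrow> \<not> (\<exists>S \<subseteq> V. is_PCM S (induced E S) n)"

text \<open>The complement of the line graph of K_{2,n}: x_i = (False,i), y_j = (True,j), 1 \<le> i,j \<le> n.\<close>
definition LK2_V :: "nat \<Rightarrow> (bool \<times> nat) set" where
  "LK2_V n = {(b, i). 1 \<le> i \<and> i \<le> n}"

definition LK2_E :: "nat \<Rightarrow> bool \<times> nat \<Rightarrow> bool \<times> nat \<Rightarrow> bool" where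
  "LK2_E n p q \<longleftrightarrow> p \<in> LK2_V n \<and> q \<in> LK2_V n \<and> fst p \<noteq> fst q \<and> snd p \<noteq> snd q"

end

theory Submission imports Defs begin

lemma conn_inv:
  assumes "connected_on E S" "s0 \<in> S" "t \<in> S"
    and "\<And>s t. s \<in> S \<Longrightarrow> t \<in> S \<Longrightarrow> E s t \<Longrightarrow> P s \<longleftrightarrow> P t"
  shows "P t \<longleftrightarrow> P s0"
proof -
  have "(induced E S)\<^sup>*\<^sup>* s0 t" using assms unfolding connected_on_def by blast
  then show ?thesis
    by (induction rule: rtranclp_induct) (use assms(4) in \<open>auto simp: induced_def\<close>)
qed

lemma mod1: "i < k \<Longrightarrow> 2 \<le> k \<Longrightarrow> Suc i mod k \<noteq> i"
  by (cases "Suc i = k") auto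

lemma mod2: "i < k \<Longrightarrow> j < k \<Longrightarrow> 2 \<le> k \<Longrightarrow> Suc i mod k = Suc j mod k \<Longrightarrow> i = j"
  by (cases "Suc i = k"; cases "Suc j = k") auto

lemma derangement:
  assumes "finite A" "2 \<le> card A"
  shows "\<exists>\<sigma>. inj_on \<sigma> A \<and> \<sigma> ` A \<subseteq> A \<and> (\<forall>a\<in>A. \<sigma> a \<noteq> a)"
proof -
  let ?k = "card A"
  obtain h where h: "bij_betw h {0..<?k} A" using ex_bij_betw_nat_finite[OF assms(1)] by blast
  define h' where "h' = the_inv_into {0..<?k} h"
  have hi: "inj_on h {0..<?k}" using h bij_betw_imp_inj_on by blast
  have h'1: "a \<in> A \<Longrightarrow> h' a < ?k \<and> h (h' a) = a" for a
    unfolding h'_def using h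
    by (metis atLeastLessThan_iff bij_betw_def f_the_inv_into_f the_inv_into_into hi subset_refl)
  define \<sigma> where "\<sigma> a = h (Suc (h' a) mod ?k)" for a
  have m: "i < ?k \<Longrightarrow> Suc i mod ?k < ?k" for i using assms(2) by simp
  have s1: "\<sigma> a \<in> A" if "a \<in> A" for a
    using h m h'1[OF that] unfolding \<sigma>_def bij_betw_def by auto
  have s2: "\<sigma> a \<noteq> a" if "a \<in> A" for a
  proof
    assume "\<sigma> a = a"
    then have "h (Suc (h' a) mod ?k) = h (h' a)" using h'1[OF that] unfolding \<sigma>_def by simp
    then have "Suc (h' a) mod ?k = h' a"
      using hi h'1[OF that] m[of "h' a"] by (auto simp: inj_on_def)
    then show False using h'1[OF that] assms(2) mod1[of "h' a" ?k] by blast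
  qed
  have s3: "inj_on \<sigma> A"
  proof (rule inj_onI)
    fix a b assume ab: "a \<in> A" "b \<in> A" "\<sigma> a = \<sigma> b"
    then have "Suc (h' a) mod ?k = Suc (h' b) mod ?k"
      using hi h'1[OF ab(1)] h'1[OF ab(2)] m[of "h' a"] m[of "h' b"] unfolding \<sigma>_def inj_on_def
      by (metis atLeastLessThan_iff zero_le)
    then have "h' a = h' b" using h'1[OF ab(1)] h'1[OF ab(2)] mod2[of "h' a" ?k "h' b"] assms(2) by blast
    then show "a = b" using h'1[OF ab(1)] h'1[OF ab(2)] by metis
  qed
  show ?thesis using s1 s2 s3 by blast
qed

lemma subset_between:
  assumes "finite U" "A \<subseteq> U" "card A \<le> n" "n \<le> card U"
  shows "\<exists>W. A \<subseteq> W \<and> W \<subseteq> U \<and> card W = n"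
proof -
  have fA: "finite A" using assms finite_subset by blast
  have "n - card A \<le> card (U - A)" using assms fA by (simp add: card_Diff_subset)
  then obtain B where B: "B \<subseteq> U - A" "card B = n - card A" "finite B"
    by (rule obtain_subset_with_card_n)
  have "card (A \<union> B) = card A + card B" using B fA by (subst card_Un_disjoint) auto
  then show ?thesis using B assms by (intro exI[of _ "A \<union> B"]) auto
qed

lemma induced_idem: "induced (induced E S) S = induced E S"
  by (auto simp: induced_def fun_eq_iff)

lemma C1:
  assumes g: "graph V E" and bp: "bipartition V E X Y" and fin: "finite V"
    and w: "w \<in> V" "\<forall>y\<in>Y. E w y"
    and pf: "PCM_free V E n" and n3: "3 \<le> n"
    and S: "S \<subseteq> V" "connected_on E S" "n \<le> card (S \<inter> X)"
  shows "\<exists>z\<in>S\<inter>Y. \<forall>x\<in>S\<inter>X. E z x"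
proof (rule ccontr)
  assume nc: "\<not> ?thesis"
  have symE: "\<And>a b. E a b \<Longrightarrow> E b a" using g unfolding graph_def by blast
  have EV: "\<And>a b. E a b \<Longrightarrow> a \<in> V \<and> b \<in> V" using g unfolding graph_def by blast
  have side: "\<And>a b. E a b \<Longrightarrow> (a \<in> X \<and> b \<in> Y) \<or> (a \<in> Y \<and> b \<in> X)"
    using bp unfolding bipartition_def by blast
  have XY: "X \<inter> Y = {}" "X \<union> Y = V" using bp unfolding bipartition_def by auto
  have finS: "finite (S\<inter>X)" using fin S(1) finite_subset by blast
  have c2: "card (S\<inter>X) \<ge> 2" using S(3) n3 by simp
  have nb: "\<exists>z\<in>S\<inter>Y. E z x" if x: "x \<in> S\<inter>X" for x
  proof -
    have c1: "card (S\<inter>X - {x}) \<ge> 1" using c2 x finS by (simp add: card_Diff_singleton)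
    have "S\<inter>X - {x} \<noteq> {}" proof assume "S\<inter>X - {x} = {}" then show False using c1 by (metis card.empty not_one_le_zero) qed
    then obtain x' where x': "x' \<in> S\<inter>X" "x' \<noteq> x" by blast
    have "(induced E S)\<^sup>*\<^sup>* x x'" using S(2) x x' unfolding connected_on_def by blast
    then obtain s where "induced E S x s" using x'(2) by (cases rule: converse_rtranclpE) auto
    then have "E x s" "s \<in> S" unfolding induced_def by auto
    then show ?thesis using side x XY symE by blast
  qed
  define cov where "cov Z \<longleftrightarrow> Z \<subseteq> S\<inter>Y \<and> S\<inter>X \<subseteq> {x. \<exists>z\<in>Z. E z x}" for Z
  have "cov (S\<inter>Y)" using nb unfolding cov_def by blast
  from ex_has_least_nat[of cov "S\<inter>Y" card, OF this]
  obtain Z where Z: "cov Z" and Zmin': "\<forall>Z'. cov Z' \<longrightarrow> card Z \<le> card Z'"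
    by (elim exE conjE)
  have Zmin: "card Z \<le> card Z'" if "cov Z'" for Z' using Zmin' that by simp
  have ZSY: "Z \<subseteq> S\<inter>Y" and Zcov: "S\<inter>X \<subseteq> {x. \<exists>z\<in>Z. E z x}" using Z unfolding cov_def by simp_all
  have "Z \<subseteq> V" using ZSY S(1) by auto
  then have finZ: "finite Z" using fin finite_subset by auto
  have SXne: "S\<inter>X \<noteq> {}" using c2 by auto
  have Zne: "Z \<noteq> {}" using Zcov SXne by auto
  have Z2: "2 \<le> card Z"
  proof (rule ccontr)
    assume "\<not> 2 \<le> card Z"
    moreover have "card Z > 0" using Zne finZ by (simp add: card_gt_0_iff)
    ultimately have "card Z = 1" by linarith
    then obtain z where z: "Z = {z}" by (rule card_1_singletonE)
    have "z \<in> S\<inter>Y" using ZSY z by auto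
    moreover have "\<forall>x\<in>S\<inter>X. E z x" using Zcov z by auto
    ultimately show False using nc by blast
  qed
  have priv: "\<exists>x\<in>S\<inter>X. E z x \<and> (\<forall>z'\<in>Z. z' \<noteq> z \<longrightarrow> \<not> E z' x)" if zZ: "z \<in> Z" for z
  proof (rule ccontr)
    assume na: "\<not> ?thesis"
    have "S\<inter>X \<subseteq> {x. \<exists>z'\<in>Z - {z}. E z' x}"
    proof
      fix x assume x: "x \<in> S\<inter>X"
      then obtain z'' where z'': "z'' \<in> Z" "E z'' x" using Zcov by auto
      show "x \<in> {x. \<exists>z'\<in>Z - {z}. E z' x}"
      proof (cases "z'' = z")
        case True
        then have "E z x" using z'' by simp
        then have "\<exists>z'\<in>Z. z' \<noteq> z \<and> E z' x" using na x by blast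
        then show ?thesis by auto
      next
        case False then show ?thesis using z'' by auto
      qed
    qed
    then have "cov (Z - {z})" using ZSY unfolding cov_def by auto
    then have "card Z \<le> card (Z - {z})" by (rule Zmin)
    moreover have "card (Z - {z}) < card Z" using finZ zZ by (rule card_Diff1_less)
    ultimately show False by simp
  qed
  have "\<forall>z\<in>Z. \<exists>x. x \<in> S\<inter>X \<and> E z x \<and> (\<forall>z'\<in>Z. z' \<noteq> z \<longrightarrow> \<not> E z' x)"
    using priv by blast
  then obtain p where p': "\<forall>z\<in>Z. p z \<in> S\<inter>X \<and> E z (p z) \<and> (\<forall>z'\<in>Z. z' \<noteq> z \<longrightarrow> \<not> E z' (p z))"
    by (metis (no_types, lifting))
  have p: "p z \<in> S\<inter>X \<and> E z (p z) \<and> (\<forall>z'\<in>Z. z' \<noteq> z \<longrightarrow> \<not> E z' (p z))" if "z \<in> Z" for z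
    using p' that by blast
  have pinj: "inj_on p Z"
  proof (rule inj_onI)
    fix a b assume ab: "a \<in> Z" "b \<in> Z" "p a = p b"
    show "a = b"
    proof (rule ccontr)
      assume "a \<noteq> b"
      then have "\<not> E b (p a)" using p[OF ab(1)] ab(2) by auto
      then show False using p[OF ab(2)] ab(3) by simp
    qed
  qed
  define k where "k = min (card Z) (n - 1)"
  obtain Z' where Z': "Z' \<subseteq> Z" "card Z' = k" "finite Z'"
    using obtain_subset_with_card_n[of k Z] k_def by auto
  have k2: "2 \<le> k" using Z2 n3 k_def by auto
  have Z'Y: "Z' \<subseteq> Y" using Z' ZSY by auto
  define U where "U = {x. \<exists>z\<in>Z'. E z x}"
  have UX: "U \<subseteq> X" unfolding U_def using Z'Y side XY by blast
  have "U \<subseteq> V" using UX XY by auto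
  then have finU: "finite U" using fin finite_subset by auto
  have Z'ne: "Z' \<noteq> {}" using k2 Z' by auto
  obtain z0 where z0: "z0 \<in> Z'" using Z'ne by auto
  then have "z0 \<in> Y" "E w z0" using Z'Y w(2) by auto
  then have wX: "w \<in> X" using side[of w z0] XY by auto
  define A where "A = insert w (p ` Z')"
  have wnp: "w \<notin> p ` Z'"
  proof
    assume "w \<in> p ` Z'"
    then obtain z where z: "z \<in> Z'" "w = p z" by blast
    have c1: "card (Z' - {z}) \<ge> 1" using k2 Z' z by (simp add: card_Diff_singleton)
    have "Z' - {z} \<noteq> {}" proof assume "Z' - {z} = {}" then show False using c1 by (metis card.empty not_one_le_zero) qed
    then obtain z' where z': "z' \<in> Z'" "z' \<noteq> z" by blast
    have zz: "z \<in> Z" "z' \<in> Z" using z z' Z'(1) by auto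
    have "\<not> E z' (p z)" using p[OF zz(1)] zz(2) z'(2) by auto
    moreover have "E z' w" using w(2) z' Z'Y symE by blast
    ultimately show False using z by simp
  qed
  have cardA: "card A = k + 1"
  proof -
    have "card (p ` Z') = k" using card_image[OF inj_on_subset[OF pinj Z'(1)]] Z'(2) by simp
    then show ?thesis unfolding A_def using wnp Z'(3) by simp
  qed
  have AU: "A \<subseteq> U"
  proof -
    have "E z0 w" using symE \<open>E w z0\<close> by blast
    then have "w \<in> U" using z0 unfolding U_def by blast
    moreover have "p ` Z' \<subseteq> U"
    proof
      fix x assume "x \<in> p ` Z'"
      then obtain z where z: "z \<in> Z'" "x = p z" by blast
      then have "E z (p z)" using p[of z] Z'(1) by auto
      then show "x \<in> U" unfolding U_def using z by auto
    qed
    ultimately show ?thesis unfolding A_def by blast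
  qed
  have cardU: "n \<le> card U"
  proof (cases "card Z \<le> n - 1")
    case True
    then have "card Z' = card Z" using Z'(2) k_def by simp
    then have "Z' = Z" using card_subset_eq[OF finZ Z'(1)] by simp
    then have "S\<inter>X \<subseteq> U" using Zcov unfolding U_def by blast
    then have "card (S\<inter>X) \<le> card U" by (rule card_mono[OF finU])
    then show ?thesis using S(3) by simp
  next
    case False
    then have "card A = n" using cardA k_def n3 by auto
    then show ?thesis using card_mono[OF finU AU] by simp
  qed
  have "card A \<le> n" using cardA k_def n3 by auto
  then obtain W where W: "A \<subseteq> W" "W \<subseteq> U" "card W = n"
    using subset_between[OF finU AU _ cardU] by blast
  obtain \<sigma> where \<sigma>: "inj_on \<sigma> Z'" "\<sigma> ` Z' \<subseteq> Z'" "\<forall>a\<in>Z'. \<sigma> a \<noteq> a"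
    using derangement[OF Z'(3)] k2 Z'(2) by auto
  define H where "H = Z' \<union> W"
  define R where "R = induced E H"
  have WX: "W \<subseteq> X" using W UX by auto
  have HV: "H \<subseteq> V" using Z'Y WX XY H_def by auto
  have wH: "w \<in> H" using W A_def H_def by auto
  have reach: "R\<^sup>*\<^sup>* t w \<and> R\<^sup>*\<^sup>* w t" if tH: "t \<in> H" for t
  proof (cases "t \<in> Z'")
    case True
    then have "R t w" "R w t" using w(2) Z'Y symE wH tH unfolding R_def induced_def by auto
    then show ?thesis by auto
  next
    case False
    then have "t \<in> U" using tH W H_def by auto
    then obtain z where z: "z \<in> Z'" "E z t" unfolding U_def by blast
    have zH: "z \<in> H" using z H_def by auto
    have "R t z" "R z t" "R z w" "R w z" using z zH tH wH w(2) Z'Y symE unfolding R_def induced_def by auto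
    then show ?thesis by (meson converse_rtranclp_into_rtranclp r_into_rtranclp)
  qed
  have iR: "induced R H = R" unfolding R_def by (rule induced_idem)
  have conn: "connected_on R H"
    unfolding connected_on_def iR using reach wH by (meson rtranclp_trans empty_iff)
  have bip: "bipartition H R Z' W"
    unfolding bipartition_def
  proof (intro conjI allI impI)
    show "Z' \<inter> W = {}" using Z'Y WX XY by blast
    show "Z' \<union> W = H" unfolding H_def by simp
    fix a b assume "R a b"
    then have ab: "a \<in> H" "b \<in> H" "E a b" unfolding R_def induced_def by auto
    have HX: "H \<inter> X = W" "H \<inter> Y = Z'" using Z'Y WX XY unfolding H_def by auto
    show "a \<in> Z' \<and> b \<in> W \<or> a \<in> W \<and> b \<in> Z'"
      using side[OF ab(3)] ab(1,2) HX by blast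
  qed
  have "is_PCM H R n"
    unfolding is_PCM_def
  proof (intro conjI)
    show "finite H" using HV fin finite_subset by blast
    show "connected_on R H" by (rule conn)
    show "\<exists>Z W. bipartition H R Z W \<and> 2 \<le> card Z \<and> card Z \<le> card W \<and> card W = n \<and>
        (\<exists>m. inj_on m Z \<and> (\<forall>z\<in>Z. m z \<in> W \<and> \<not> R z (m z)))"
    proof (intro exI conjI)
      show "bipartition H R Z' W" by (rule bip)
      show "2 \<le> card Z'" using k2 Z' by simp
      show "card Z' \<le> card W" using Z' W k_def by simp
      show "card W = n" by (rule W(3))
      show "inj_on (p \<circ> \<sigma>) Z'"
      proof -
        have "\<sigma> ` Z' \<subseteq> Z" using \<sigma>(2) Z'(1) by blast
        then have "inj_on p (\<sigma> ` Z')" using inj_on_subset[OF pinj] by blast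
        then show ?thesis using comp_inj_on[OF \<sigma>(1)] by blast
      qed
      show "\<forall>z\<in>Z'. (p \<circ> \<sigma>) z \<in> W \<and> \<not> R z ((p \<circ> \<sigma>) z)"
      proof
        fix z assume z: "z \<in> Z'"
        have sz: "\<sigma> z \<in> Z'" "\<sigma> z \<noteq> z" using \<sigma> z by auto
        have zz: "z \<in> Z" "\<sigma> z \<in> Z" using z sz Z'(1) by auto
        have "p (\<sigma> z) \<in> W" using sz W A_def by auto
        moreover have "\<not> E z (p (\<sigma> z))" using p[OF zz(2)] zz(1) sz(2) by auto
        ultimately show "(p \<circ> \<sigma>) z \<in> W \<and> \<not> R z ((p \<circ> \<sigma>) z)" unfolding R_def induced_def by auto
      qed
    qed
  qed
  then have "is_PCM H (induced E H) n" unfolding R_def .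
  then have "\<exists>S\<subseteq>V. is_PCM S (induced E S) n" using HV by blast
  then show False using pf unfolding PCM_free_def by simp
qed

lemma connected_induced: "connected_on (induced E S) S = connected_on E S"
  unfolding connected_on_def induced_idem ..

lemma LK2_E_sym: "LK2_E n p q \<Longrightarrow> LK2_E n q p"
  unfolding LK2_E_def by auto

lemma pcm_block:
  assumes g: "graph V E" and bp: "bipartition V E X Y"
    and u: "\<exists>c\<in>V. \<forall>x\<in>X. E c x" and v: "\<exists>c\<in>V. \<forall>y\<in>Y. E c y"
    and hh: "HH_morphic V E (LK2_V n) (LK2_E n)"
    and HV: "H \<subseteq> V" and pcm: "is_PCM H (induced E H) n"
  shows False
proof -
  have XY: "X \<inter> Y = {}" "X \<union> Y = V" using bp unfolding bipartition_def by auto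
  have nXY: "\<And>a. a \<in> X \<Longrightarrow> a \<notin> Y" and XorY: "\<And>a. a \<in> V \<Longrightarrow> a \<in> X \<or> a \<in> Y"
    using XY by auto
  have side: "\<And>a b. E a b \<Longrightarrow> (a \<in> X \<and> b \<in> Y) \<or> (a \<in> Y \<and> b \<in> X)"
    using bp unfolding bipartition_def by blast
  from pcm have finH: "finite H" and connH: "connected_on (induced E H) H"
    unfolding is_PCM_def by auto
  from pcm obtain Z W m where bipH: "bipartition H (induced E H) Z W" and cW: "card W = n"
    and cZ: "2 \<le> card Z" and minj: "inj_on m Z" and mW: "\<forall>z\<in>Z. m z \<in> W \<and> \<not> induced E H z (m z)"
    unfolding is_PCM_def by blast
  have ZW: "Z \<inter> W = {}" "Z \<union> W = H" using bipH unfolding bipartition_def by auto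
  have nZW: "\<And>a. a \<in> Z \<Longrightarrow> a \<notin> W" and ZorW: "\<And>a. a \<in> H \<Longrightarrow> a \<in> Z \<or> a \<in> W"
    and ZH: "Z \<subseteq> H" and WH: "W \<subseteq> H"
    using ZW by auto
  have sideH: "\<And>a b. induced E H a b \<Longrightarrow> (a \<in> Z \<and> b \<in> W) \<or> (a \<in> W \<and> b \<in> Z)"
    using bipH unfolding bipartition_def by blast
  have finW: "finite W" using finH ZW by auto
  have "Z \<noteq> {}" using cZ by auto
  then obtain z1 where z1: "z1 \<in> Z" by auto
  define w0 where "w0 = m z1"
  have w0W: "w0 \<in> W" using mW z1 w0_def by auto
  have w0H: "w0 \<in> H" using w0W ZW by auto
  have inv: "(t \<in> W \<longleftrightarrow> t \<in> X) \<longleftrightarrow> (w0 \<in> W \<longleftrightarrow> w0 \<in> X)" if tH: "t \<in> H" for t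
  proof (rule conn_inv[OF connH w0H tH])
    fix s t assume st: "s \<in> H" "t \<in> H" "induced E H s t"
    have "E s t" using st unfolding induced_def by auto
    from side[OF this] sideH[OF st(3)] nZW nXY
    show "(s \<in> W \<longleftrightarrow> s \<in> X) \<longleftrightarrow> (t \<in> W \<longleftrightarrow> t \<in> X)" by blast
  qed
  obtain c where c: "c \<in> V" "\<forall>w\<in>W. E c w"
  proof (cases "w0 \<in> X")
    case True
    have "W \<subseteq> X" using inv True w0W WH by blast
    then show ?thesis using u that by blast
  next
    case False
    have "W \<subseteq> Y"
    proof
      fix t assume t: "t \<in> W"
      then have "t \<notin> X" using inv[of t] False w0W WH by blast
      then show "t \<in> Y" using XorY t WH HV by blast
    qed
    then show ?thesis using v that by blast
  qed
  obtain h where h: "bij_betw h W {0..<card W}" using ex_bij_betw_finite_nat[OF finW] by blast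
  have hinj: "inj_on h W" using h bij_betw_imp_inj_on by blast
  have hW: "w \<in> W \<Longrightarrow> h w < n" for w using h cW unfolding bij_betw_def by auto
  have hsurj: "\<exists>w\<in>W. h w = j" if "j < n" for j
  proof -
    have "j \<in> h ` W" using that h cW by (simp add: bij_betw_def)
    then show ?thesis by auto
  qed
  define f where "f t = (if t \<in> W then (False, Suc (h t)) else (True, Suc (h (m t))))" for t
  define T where "T = f ` H"
  have fV: "f t \<in> LK2_V n" if "t \<in> H" for t
  proof (cases "t \<in> W")
    case True then show ?thesis using hW[OF True] unfolding f_def LK2_V_def by auto
  next
    case False then have "t \<in> Z" using that ZW by auto
    then have "m t \<in> W" using mW by auto
    then show ?thesis using hW[OF \<open>m t \<in> W\<close>] False unfolding f_def LK2_V_def by auto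
  qed
  have TV: "T \<subseteq> LK2_V n" using fV T_def by auto
  have edge: "LK2_E n (f a) (f b)" if ab: "a \<in> Z" "b \<in> W" "induced E H a b" for a b
  proof -
    have aW: "a \<notin> W" using ab ZW by auto
    have "m a \<in> W" "m a \<noteq> b" using mW ab by auto
    then have "h (m a) \<noteq> h b" using hinj ab(2) unfolding inj_on_def by blast
    moreover have "a \<in> H" "b \<in> H" using ab ZW by auto
    moreover have "f a = (True, Suc (h (m a)))" "f b = (False, Suc (h b))"
      using aW ab(2) unfolding f_def by auto
    ultimately show ?thesis using fV[of a] fV[of b] unfolding LK2_E_def by auto
  qed
  have homf: "hom H (induced E H) T (induced (LK2_E n) T) f"
    unfolding hom_def
  proof (intro conjI ballI allI impI)
    fix t assume "t \<in> H" then show "f t \<in> T" using T_def by auto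
  next
    fix a b assume ab: "a \<in> H \<and> b \<in> H \<and> induced E H a b"
    have "LK2_E n (f a) (f b)"
    proof (cases "a \<in> Z")
      case True
      then have "b \<in> W" using sideH ab nZW by blast
      then show ?thesis using edge True ab by blast
    next
      case False
      then have "a \<in> W" "b \<in> Z" using sideH ab ZorW by blast+
      moreover have "induced E H b a" using ab g unfolding induced_def graph_def by blast
      ultimately show ?thesis using edge LK2_E_sym by blast
    qed
    then show "induced (LK2_E n) T (f a) (f b)" using ab T_def unfolding induced_def by auto
  qed
  have connE: "connected_on E H" using connH by (simp add: connected_induced)
  have pre: "H \<subseteq> V \<and> finite H \<and> connected_on E H \<and> T \<subseteq> LK2_V n \<and>
        hom H (induced E H) T (induced (LK2_E n) T) f \<and> f ` H = T"
    using HV finH connE TV homf T_def by simp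
  obtain gg where gg: "hom V E (LK2_V n) (LK2_E n) gg" "\<forall>x\<in>H. gg x = f x"
    using hh[unfolded HH_morphic_def, rule_format, OF pre] by (elim exE conjE)
  have ggV: "\<forall>x\<in>V. gg x \<in> LK2_V n" and ggE: "\<forall>x y. x \<in> V \<and> y \<in> V \<and> E x y \<longrightarrow> LK2_E n (gg x) (gg y)"
    using gg(1) unfolding hom_def by simp_all
  have "gg c \<in> LK2_V n" using ggV c(1) by simp
  then obtain bb j where bj: "gg c = (bb, j)" "1 \<le> j" "j \<le> n" unfolding LK2_V_def by auto
  have "j - 1 < n" using bj by linarith
  then obtain w where w: "w \<in> W" "h w = j - 1" using hsurj[of "j - 1"] by blast
  have "w \<in> V" using w WH HV by auto
  then have "LK2_E n (gg c) (gg w)" using ggE c w(1) by simp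
  moreover have "gg w = (False, j)" using gg(2) w WH bj unfolding f_def by auto
  ultimately show False using bj unfolding LK2_E_def by auto
qed

lemma morph21:
  assumes g: "graph V E" and bp: "bipartition V E X Y" and X: "X \<noteq> {}" and Y: "Y \<noteq> {}"
    and u: "u \<in> V" "\<forall>x\<in>X. E u x" and v: "v \<in> V" "\<forall>y\<in>Y. E v y"
  shows "HH_morphic (LK2_V n) (LK2_E n) V E"
  unfolding HH_morphic_def
proof (intro allI impI)
  fix S T f
  assume a: "S \<subseteq> LK2_V n \<and> finite S \<and> connected_on (LK2_E n) S \<and> T \<subseteq> V \<and>
      hom S (induced (LK2_E n) S) T (induced E T) f \<and> f ` S = T"
  have XY: "X \<inter> Y = {}" "X \<union> Y = V" using bp unfolding bipartition_def by auto
  have nXY: "\<And>a. a \<in> X \<Longrightarrow> a \<notin> Y" and XorY: "\<And>a. a \<in> V \<Longrightarrow> a \<in> X \<or> a \<in> Y"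
    using XY by auto
  have side: "\<And>a b. E a b \<Longrightarrow> (a \<in> X \<and> b \<in> Y) \<or> (a \<in> Y \<and> b \<in> X)"
    using bp unfolding bipartition_def by blast
  have symE: "\<And>a b. E a b \<Longrightarrow> E b a" using g unfolding graph_def by blast
  obtain x0 where "x0 \<in> X" using X by auto
  then have uY: "u \<in> Y" using u side[of u x0] nXY by blast
  obtain y0 where "y0 \<in> Y" using Y by auto
  then have vX: "v \<in> X" using v side[of v y0] nXY by blast
  have Evu: "E v u" using v uY by blast
  have conn: "connected_on (LK2_E n) S" using a by blast
  have fT: "\<And>p. p \<in> S \<Longrightarrow> f p \<in> T" using a unfolding hom_def by blast
  have fV: "\<And>p. p \<in> S \<Longrightarrow> f p \<in> V" using fT a by blast
  have fE: "\<And>p q. p \<in> S \<Longrightarrow> q \<in> S \<Longrightarrow> LK2_E n p q \<Longrightarrow> E (f p) (f q)"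
  proof -
    fix p q assume pq: "p \<in> S" "q \<in> S" "LK2_E n p q"
    then have "induced E T (f p) (f q)" using a unfolding hom_def induced_def by blast
    then show "E (f p) (f q)" unfolding induced_def by simp
  qed
  from conn obtain s0 where s0: "s0 \<in> S" unfolding connected_on_def by auto
  define \<gamma> where "\<gamma> = (fst s0 \<longleftrightarrow> f s0 \<in> X)"
  have sd: "(fst p \<longleftrightarrow> f p \<in> X) = \<gamma>" if "p \<in> S" for p
    unfolding \<gamma>_def
  proof (rule conn_inv[OF conn s0 that])
    fix s t assume st: "s \<in> S" "t \<in> S" "LK2_E n s t"
    have "fst s \<noteq> fst t" using st(3) unfolding LK2_E_def by auto
    moreover have "(f s \<in> X) \<noteq> (f t \<in> X)" using side[OF fE[OF st]] nXY by blast
    ultimately show "(fst s \<longleftrightarrow> f s \<in> X) \<longleftrightarrow> (fst t \<longleftrightarrow> f t \<in> X)" by blast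
  qed
  have sdX: "f p \<in> X \<longleftrightarrow> fst p = \<gamma>" if "p \<in> S" for p using sd[OF that] by blast
  define gg where "gg p = (if p \<in> S then f p else if fst p = \<gamma> then v else u)" for p
  have gX: "gg p \<in> X \<longleftrightarrow> fst p = \<gamma>" and gV: "gg p \<in> V" for p
    using sdX fV uY vX u v nXY unfolding gg_def by auto
  have "hom (LK2_V n) (LK2_E n) V E gg"
    unfolding hom_def
  proof (intro conjI ballI allI impI)
    fix p show "gg p \<in> V" by (rule gV)
  next
    fix p q assume pq: "p \<in> LK2_V n \<and> q \<in> LK2_V n \<and> LK2_E n p q"
    have fpq: "fst p \<noteq> fst q" using pq unfolding LK2_E_def by auto
    show "E (gg p) (gg q)"
    proof (cases "p \<in> S \<and> q \<in> S")
      case True then show ?thesis using fE pq unfolding gg_def by auto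
    next
      case False
      have XoY: "gg p \<in> X \<and> gg q \<in> Y \<or> gg p \<in> Y \<and> gg q \<in> X"
        using gX[of p] gX[of q] XorY[OF gV[of p]] XorY[OF gV[of q]] fpq by blast
      consider "p \<notin> S" | "q \<notin> S" using False by blast
      then show ?thesis
      proof cases
        case 1
        then have "gg p = v \<or> gg p = u" unfolding gg_def by auto
        then show ?thesis using XoY u v uY vX nXY symE by blast
      next
        case 2
        then have "gg q = v \<or> gg q = u" unfolding gg_def by auto
        then show ?thesis using XoY u v uY vX nXY symE by blast
      qed
    qed
  qed
  moreover have "\<forall>x\<in>S. gg x = f x" unfolding gg_def by auto
  ultimately show "\<exists>g. hom (LK2_V n) (LK2_E n) V E g \<and> (\<forall>x\<in>S. g x = f x)" by blast
qed

lemma bip_sym: "bipartition V E X Y \<Longrightarrow> bipartition V E Y X"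
  unfolding bipartition_def by blast

lemma conn_insert:
  assumes c: "connected_on E S" and s: "s \<in> S" and e: "E v s" "E s v"
  shows "connected_on E (insert v S)"
proof -
  let ?S = "insert v S"
  have le: "induced E S \<le> induced E ?S" unfolding induced_def by auto
  have lift: "(induced E ?S)\<^sup>*\<^sup>* a b" if "a \<in> S" "b \<in> S" for a b
  proof -
    have "(induced E S)\<^sup>*\<^sup>* a b" using c that unfolding connected_on_def by blast
    then show ?thesis using rtranclp_mono[OF le] by blast
  qed
  have vs: "induced E ?S v s" "induced E ?S s v" using e s unfolding induced_def by auto
  have "(induced E ?S)\<^sup>*\<^sup>* a b" if ab: "a \<in> ?S" "b \<in> ?S" for a b
  proof (cases "a = v")
    case True
    show ?thesis
    proof (cases "b = v")
      case True with \<open>a = v\<close> show ?thesis by simp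
    next
      case False
      then have "b \<in> S" using ab by auto
      then show ?thesis using lift[OF s] vs \<open>a = v\<close> by (meson converse_rtranclp_into_rtranclp)
    qed
  next
    case False
    then have aS: "a \<in> S" using ab by auto
    show ?thesis
    proof (cases "b = v")
      case True
      then show ?thesis using lift[OF aS s] vs by (meson rtranclp.rtrancl_into_rtrancl)
    next
      case False
      then have "b \<in> S" using ab by auto
      then show ?thesis using lift[OF aS] by blast
    qed
  qed
  then show ?thesis unfolding connected_on_def by blast
qed

lemma morph12:
  assumes g: "graph V E" and bp: "bipartition V E X Y" and fin: "finite V"
    and X: "X \<noteq> {}" and Y: "Y \<noteq> {}"
    and u: "u \<in> V" "\<forall>x\<in>X. E u x" and v: "v \<in> V" "\<forall>y\<in>Y. E v y"
    and pf: "PCM_free V E n" and n3: "3 \<le> n"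
  shows "HH_morphic V E (LK2_V n) (LK2_E n)"
  unfolding HH_morphic_def
proof (intro allI impI)
  fix S T f
  assume a: "S \<subseteq> V \<and> finite S \<and> connected_on E S \<and> T \<subseteq> LK2_V n \<and>
      hom S (induced E S) T (induced (LK2_E n) T) f \<and> f ` S = T"
  have SV: "S \<subseteq> V" and finS: "finite S" and conn: "connected_on E S" using a by auto
  have XY: "X \<inter> Y = {}" "X \<union> Y = V" using bp unfolding bipartition_def by auto
  have nXY: "\<And>a. a \<in> X \<Longrightarrow> a \<notin> Y" and XorY: "\<And>a. a \<in> V \<Longrightarrow> a \<in> X \<or> a \<in> Y"
    using XY by auto
  have side: "\<And>a b. E a b \<Longrightarrow> (a \<in> X \<and> b \<in> Y) \<or> (a \<in> Y \<and> b \<in> X)"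
    using bp unfolding bipartition_def by blast
  have symE: "\<And>a b. E a b \<Longrightarrow> E b a" using g unfolding graph_def by blast
  obtain x0 where "x0 \<in> X" using X by auto
  then have uY: "u \<in> Y" using u side[of u x0] nXY by blast
  obtain y0 where "y0 \<in> Y" using Y by auto
  then have vX: "v \<in> X" using v side[of v y0] nXY by blast
  have Evu: "E v u" using v uY by blast
  have fT: "\<And>p. p \<in> S \<Longrightarrow> f p \<in> T" using a unfolding hom_def by blast
  have fV: "\<And>p. p \<in> S \<Longrightarrow> f p \<in> LK2_V n" using fT a by blast
  have rng: "1 \<le> snd (f p) \<and> snd (f p) \<le> n" if "p \<in> S" for p
    using fV[OF that] unfolding LK2_V_def by auto
  have fE: "LK2_E n (f p) (f q)" if pq: "p \<in> S" "q \<in> S" "E p q" for p q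
  proof -
    have "induced (LK2_E n) T (f p) (f q)" using a pq unfolding hom_def induced_def by blast
    then show "LK2_E n (f p) (f q)" unfolding induced_def by simp
  qed
  have ef: "snd (f p) \<noteq> snd (f q)" if pq: "p \<in> S" "q \<in> S" "E p q" for p q
    using fE[OF pq] unfolding LK2_E_def by auto
  from conn obtain s0 where s0: "s0 \<in> S" unfolding connected_on_def by auto
  define \<beta> where "\<beta> = (fst (f s0) \<longleftrightarrow> s0 \<in> X)"
  have sd: "(fst (f p) \<longleftrightarrow> p \<in> X) = \<beta>" if "p \<in> S" for p
    unfolding \<beta>_def
  proof (rule conn_inv[OF conn s0 that])
    fix s t assume st: "s \<in> S" "t \<in> S" "E s t"
    have "fst (f s) \<noteq> fst (f t)" using fE[OF st] unfolding LK2_E_def by auto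
    moreover have "(s \<in> X) \<noteq> (t \<in> X)" using side[OF st(3)] nXY by blast
    ultimately show "(fst (f s) \<longleftrightarrow> s \<in> X) \<longleftrightarrow> (fst (f t) \<longleftrightarrow> t \<in> X)" by blast
  qed
  have sdX: "fst (f p) = \<beta>" if "p \<in> S" "p \<in> X" for p using sd[OF that(1)] that(2) by blast
  have sdY: "fst (f p) = (\<not> \<beta>)" if "p \<in> S" "p \<in> Y" for p using sd[OF that(1)] that(2) nXY by blast
  define I where "I = (\<lambda>p. snd (f p)) ` (S \<inter> X)"
  define J where "J = (\<lambda>p. snd (f p)) ` (S \<inter> Y)"
  have finSX: "finite (S \<inter> X)" "finite (S \<inter> Y)" using finS by auto
  have F1: "\<exists>b. 1 \<le> b \<and> b \<le> n \<and> b \<notin> I"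
  proof (cases "n \<le> card (S \<inter> X)")
    case True
    obtain z where z: "z \<in> S \<inter> Y" "\<forall>x\<in>S \<inter> X. E z x"
      using C1[OF g bp fin v pf n3 SV conn True] by blast
    have "snd (f z) \<notin> I"
    proof
      assume "snd (f z) \<in> I"
      then obtain x where x: "x \<in> S \<inter> X" "snd (f z) = snd (f x)" unfolding I_def by auto
      then show False using ef[of z x] z by auto
    qed
    then show ?thesis using rng[of z] z by blast
  next
    case False
    have "card I \<le> card (S \<inter> X)" unfolding I_def by (rule card_image_le[OF finSX(1)])
    then have "card I < card {1..n}" using False by simp
    then have "\<not> {1..n} \<subseteq> I" using card_mono[of I "{1..n}"] finSX(1) unfolding I_def by fastforce
    then show ?thesis by auto
  qed
  have F2: "\<exists>a. 1 \<le> a \<and> a \<le> n \<and> a \<notin> J"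
  proof (cases "n \<le> card (S \<inter> Y)")
    case True
    obtain z where z: "z \<in> S \<inter> X" "\<forall>x\<in>S \<inter> Y. E z x"
      using C1[OF g bip_sym[OF bp] fin u pf n3 SV conn True] by blast
    have "snd (f z) \<notin> J"
    proof
      assume "snd (f z) \<in> J"
      then obtain x where x: "x \<in> S \<inter> Y" "snd (f z) = snd (f x)" unfolding J_def by auto
      then show False using ef[of z x] z by auto
    qed
    then show ?thesis using rng[of z] z by blast
  next
    case False
    have "card J \<le> card (S \<inter> Y)" unfolding J_def by (rule card_image_le[OF finSX(2)])
    then have "card J < card {1..n}" using False by simp
    then have "\<not> {1..n} \<subseteq> J" using card_mono[of J "{1..n}"] finSX(2) unfolding J_def by fastforce
    then show ?thesis by auto
  qed
  have ab: "\<exists>a b. 1 \<le> a \<and> a \<le> n \<and> 1 \<le> b \<and> b \<le> n \<and> a \<noteq> b \<and> a \<notin> J \<and> b \<notin> I"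
  proof (cases "v \<in> S")
    case True
    define a0 where "a0 = snd (f v)"
    have "a0 \<notin> J"
    proof
      assume "a0 \<in> J"
      then obtain y where y: "y \<in> S \<inter> Y" "a0 = snd (f y)" unfolding J_def by auto
      then show False using ef[of v y] True v a0_def by auto
    qed
    moreover have "a0 \<in> I" using True vX unfolding I_def a0_def by auto
    ultimately show ?thesis using F1 rng[OF True] a0_def by metis
  next
    case vS: False
    obtain a0 where a0: "1 \<le> a0" "a0 \<le> n" "a0 \<notin> J" using F2 by blast
    obtain b0 where b0: "1 \<le> b0" "b0 \<le> n" "b0 \<notin> I" using F1 by blast
    show ?thesis
    proof (rule ccontr)
      assume na: "\<not> ?thesis"
      then have eq: "a0 = b0" using a0 b0 by blast
      have subI: "{1..n} - {a0} \<subseteq> I"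
      proof
        fix j assume j: "j \<in> {1..n} - {a0}"
        show "j \<in> I"
        proof (rule ccontr)
          assume "j \<notin> I"
          then show False using na a0 j by auto
        qed
      qed
      have subJ: "{1..n} - {a0} \<subseteq> J"
      proof
        fix j assume j: "j \<in> {1..n} - {a0}"
        show "j \<in> J"
        proof (rule ccontr)
          assume "j \<notin> J"
          then show False using na b0 eq j by auto
        qed
      qed
      have cm: "card ({1..n} - {a0}) = n - 1" using a0 by simp
      have "n - 1 \<le> card I" using card_mono[OF _ subI] finSX(1) cm unfolding I_def by simp
      also have "card I \<le> card (S \<inter> X)" unfolding I_def by (rule card_image_le[OF finSX(1)])
      finally have cSX: "n - 1 \<le> card (S \<inter> X)" .
      have "2 \<in> {1..n} - {a0} \<or> 3 \<in> {1..n} - {a0}" using n3 by auto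
      then obtain j where "j \<in> J" using subJ by blast
      then obtain y where y: "y \<in> S \<inter> Y" unfolding J_def by auto
      have Ev: "E v y" "E y v" using v y symE by auto
      have conn': "connected_on E (insert v S)"
        using conn_insert[OF conn _ Ev] y by blast
      have "insert v S \<inter> X = insert v (S \<inter> X)" using vX by auto
      then have "card (insert v S \<inter> X) = Suc (card (S \<inter> X))" using vS finSX(1) by simp
      then have cn: "n \<le> card (insert v S \<inter> X)" using cSX n3 by simp
      have SV': "insert v S \<subseteq> V" using SV v by auto
      obtain z where z: "z \<in> insert v S \<inter> Y" "\<forall>x\<in>insert v S \<inter> X. E z x"
        using C1[OF g bp fin v pf n3 SV' conn' cn] by blast
      have zS: "z \<in> S" "z \<in> Y" using z vX nXY by auto
      have "snd (f z) \<in> J" unfolding J_def using zS by auto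
      then have "snd (f z) \<noteq> a0" using a0 by auto
      then have "snd (f z) \<in> I" using subI rng[OF zS(1)] by auto
      then obtain x where x: "x \<in> S \<inter> X" "snd (f z) = snd (f x)" unfolding I_def by auto
      have "E z x" using z x by auto
      then show False using ef[of z x] zS x by auto
    qed
  qed
  then obtain aa bb where abb: "1 \<le> aa" "aa \<le> n" "1 \<le> bb" "bb \<le> n" "aa \<noteq> bb" "aa \<notin> J" "bb \<notin> I"
    by blast
  define gg where "gg x = (if x \<in> S then f x else if x \<in> X then (\<beta>, aa) else (\<not> \<beta>, bb))" for x
  have pvV: "(\<beta>, aa) \<in> LK2_V n" "(\<not> \<beta>, bb) \<in> LK2_V n" using abb unfolding LK2_V_def by auto
  have ggV: "gg x \<in> LK2_V n" if "x \<in> V" for x using fV pvV unfolding gg_def by auto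
  have XYedge: "LK2_E n (gg x) (gg y)" if xy: "x \<in> X" "y \<in> Y" "E x y" for x y
  proof -
    have yX: "y \<notin> X" using xy nXY by blast
    have xV: "x \<in> V" "y \<in> V" using xy XY by auto
    show ?thesis
    proof (cases "x \<in> S")
      case xS: True
      show ?thesis
      proof (cases "y \<in> S")
        case True then show ?thesis using fE xS xy unfolding gg_def by auto
      next
        case False
        have "snd (f x) \<in> I" using xS xy unfolding I_def by auto
        then have "snd (f x) \<noteq> bb" using abb by auto
        moreover have "fst (f x) = \<beta>" using sdX xS xy by auto
        moreover have "gg y = (\<not> \<beta>, bb)" "gg x = f x" using False yX xS unfolding gg_def by auto
        ultimately show ?thesis using fV[OF xS] pvV unfolding LK2_E_def by auto
      qed
    next
      case xS: False
      show ?thesis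
      proof (cases "y \<in> S")
        case True
        have "snd (f y) \<in> J" using True xy unfolding J_def by auto
        then have "snd (f y) \<noteq> aa" using abb by auto
        moreover have "fst (f y) = (\<not> \<beta>)" using sdY True xy by auto
        moreover have "gg x = (\<beta>, aa)" "gg y = f y" using True xy xS unfolding gg_def by auto
        ultimately show ?thesis using fV[OF True] pvV unfolding LK2_E_def by auto
      next
        case False
        have "gg x = (\<beta>, aa)" "gg y = (\<not> \<beta>, bb)" using False yX xS xy unfolding gg_def by auto
        then show ?thesis using pvV abb unfolding LK2_E_def by auto
      qed
    qed
  qed
  have "hom V E (LK2_V n) (LK2_E n) gg"
    unfolding hom_def
  proof (intro conjI ballI allI impI)
    fix x assume "x \<in> V" then show "gg x \<in> LK2_V n" by (rule ggV)
  next
    fix x y assume xy: "x \<in> V \<and> y \<in> V \<and> E x y"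
    then consider "x \<in> X" "y \<in> Y" | "x \<in> Y" "y \<in> X" using side by blast
    then show "LK2_E n (gg x) (gg y)"
    proof cases
      case 1 then show ?thesis using XYedge xy by blast
    next
      case 2 then show ?thesis using XYedge[of y x] xy symE LK2_E_sym by blast
    qed
  qed
  moreover have "\<forall>x\<in>S. gg x = f x" unfolding gg_def by auto
  ultimately show "\<exists>g. hom V E (LK2_V n) (LK2_E n) g \<and> (\<forall>x\<in>S. g x = f x)" by blast
qed

theorem lemma6p6:
  fixes V :: "'a set" and E :: "'a \<Rightarrow> 'a \<Rightarrow> bool" and X Y :: "'a set" and n :: nat
  assumes "3 \<le> n"
    and "finite V" and "graph V E"
    and "bipartition V E X Y" and "X \<noteq> {}" and "Y \<noteq> {}"
    and "\<exists>v\<in>V. \<forall>x\<in>X. E v x"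
    and "\<exists>v\<in>V. \<forall>y\<in>Y. E v y"
    and "max_degree V E \<ge> n"
  shows "HH_symmetric V E (LK2_V n) (LK2_E n) \<longleftrightarrow> PCM_free V E n"
proof
  assume "HH_symmetric V E (LK2_V n) (LK2_E n)"
  then have hh: "HH_morphic V E (LK2_V n) (LK2_E n)" unfolding HH_symmetric_def by simp
  show "PCM_free V E n"
    unfolding PCM_free_def
  proof
    assume "\<exists>S\<subseteq>V. is_PCM S (induced E S) n"
    then obtain H where "H \<subseteq> V" "is_PCM H (induced E H) n" by blast
    then show False using pcm_block[OF assms(3,4,7,8) hh] by blast
  qed
next
  assume pf: "PCM_free V E n"
  obtain u where u: "u \<in> V" "\<forall>x\<in>X. E u x" using assms(7) by blast
  obtain v where v: "v \<in> V" "\<forall>y\<in>Y. E v y" using assms(8) by blast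
  show "HH_symmetric V E (LK2_V n) (LK2_E n)"
    unfolding HH_symmetric_def
    using morph12[OF assms(3,4,2,5,6) u v pf assms(1)] morph21[OF assms(3,4,5,6) u v] by blast
qed

end
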